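(* Let $(V,o)$ be a normal surface singularity of degree one (i.e. $Z^2=-1$) with $p_f(V,o)>0$, where $Z$ is the fundamental cycle on the minimal resolution. Assume that $Z$ is essentially irreducible. Then $$p_a(V,o)=\frac{p(p-1)m}{2}+1,$$ where $p=p_f(V,o)$ and $m$ is the length of the Yau sequence for $Z$.
   Context: Let $\pi\colon X\to V$ be the minimal resolution and $\pi^{-1}(o)=\bigcup_{i=1}^n E_i$ the irreducible components of the exceptional set. A cycle is $D=\sum d_iE_i$, $d_i\in\mathbb Z$; $D_1\le D_2$ means coefficientwise inequality, $D_1<D_2$ means $D_1\le D_2$, $D_1\neq D_2$. $K$ is the canonical divisor of $X$; for a cycle $D>0$, $p_a(D)=1+\frac12(D^2+D\cdot K)$. The fundamental cycle $Z$ is the smallest cycle $D>0$ with support $\pi^{-1}(o)$ with $D\cdot E_i\le0$ for all $i$; $p_f(V,o)=p_a(Z)$; the degree is $-Z^2$. The arithmetic genus is $p_a(V,o)=\max\{p_a(D)\mid D>0\text{ a cycle}\}$. "$\mathcal O_D(-C)$ numerically trivial" means $C\cdot E=0$ for every irreducible component $E\le D$. $Z_{min}$ is the unique minimal cycle $0<Z_{min}\le Z$ with $p_a(Z_{min})=p_a(Z)$. Yau sequence: for a cycle $D$ that is the fundamental cycle on its support with $Z_{min}\le D$, $p_a(D)=p_f(V,o)$ and $D\cdot E=0$ for all components $E\le Z_{min}$, the Tyurina component of $D$ is the unique maximal cycle $0<D'<D$ with $\mathcal O_{D'}(-D)$ numerically trivial and $p_a(D')=p_a(D)$. Set $D_1=Z$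 and $D_{i+1}=$ Tyurina component of $D_i$ as long as $D_i\cdot E=0$ for all components $E\le Z_{min}$, stopping at the first $D_m$ with $D_m\cdot Z_{min}<0$; $m$ is the length of the Yau sequence. A $(-2)$-curve is a smooth rational exceptional curve $E$ with $E^2=-2$. $Z$ is essentially irreducible if there is a component $A\le Z$ which is not a $(-2)$-curve such that, with $k$ the coefficient of $A$ in $Z$, either $Z=kA$ or all components of $Z-kA$ are $(-2)$-curves. *)

theory Defs
  imports Complex_Main
begin

text \<open>Combinatorial model of the exceptional set of the minimal resolution
 of a normal surface singularity: the irreducible components E_i are indexed by a
 finite type 'i; inter_mat i j = E_i . E_j, and genus i = arithmetic genus p_a(E_i).\<close>

type_synonym 'i cycle = "'i \<Rightarrow> int"

definition exc_config :: "('i::finite \<Rightarrow> 'i \<Rightarrow> int) \<Rightarrow> ('i \<Rightarrow> nat) \<Rightarrow> bool" where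
  "exc_config M g \<longleftrightarrow>
     (\<forall>i j. M i j = M j i) \<and>
     (\<forall>i j. i \<noteq> j \<longrightarrow> M i j \<ge> 0) \<and>
     (\<forall>x::'i \<Rightarrow> real. (\<exists>i. x i \<noteq> 0) \<longrightarrow> (\<Sum>i\<in>UNIV. \<Sum>j\<in>UNIV. x i * x j * of_int (M i j)) < 0) \<and>
     (\<forall>i j. (\<lambda>a b. a \<noteq> b \<and> M a b > 0)\<^sup>*\<^sup>* i j)"

text \<open>minimality of the resolution: no smooth rational (-1)-curve\<close>
definition minimal_config :: "('i::finite \<Rightarrow> 'i \<Rightarrow> int) \<Rightarrow> ('i \<Rightarrow> nat) \<Rightarrow> bool" where
  "minimal_config M g \<longleftrightarrow> (\<forall>i. \<not> (g i = 0 \<and> M i i = -1))"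

definition inter :: "('i::finite \<Rightarrow> 'i \<Rightarrow> int) \<Rightarrow> 'i cycle \<Rightarrow> 'i cycle \<Rightarrow> int" where
  "inter M C D = (\<Sum>i\<in>UNIV. \<Sum>j\<in>UNIV. C i * D j * M i j)"

definition inter_comp :: "('i::finite \<Rightarrow> 'i \<Rightarrow> int) \<Rightarrow> 'i cycle \<Rightarrow> 'i \<Rightarrow> int" where
  "inter_comp M D k = (\<Sum>i\<in>UNIV. D i * M i k)"

text \<open>K . D, using adjunction K.E_i = 2 p_a(E_i) - 2 - E_i^2\<close>
definition canon :: "('i::finite \<Rightarrow> 'i \<Rightarrow> int) \<Rightarrow> ('i \<Rightarrow> nat) \<Rightarrow> 'i cycle \<Rightarrow> int" where
  "canon M g D = (\<Sum>i\<in>UNIV. D i * (2 * int (g i) - 2 - M i i))"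

text \<open>p_a(D) = 1 + (D^2 + K.D)/2 (the numerator is always even)\<close>
definition pa :: "('i::finite \<Rightarrow> 'i \<Rightarrow> int) \<Rightarrow> ('i \<Rightarrow> nat) \<Rightarrow> 'i cycle \<Rightarrow> int" where
  "pa M g D = 1 + (inter M D D + canon M g D) div 2"

definition pos_cycle :: "'i cycle \<Rightarrow> bool" where
  "pos_cycle D \<longleftrightarrow> (\<forall>i. D i \<ge> 0) \<and> (\<exists>i. D i \<noteq> 0)"

definition supp :: "'i cycle \<Rightarrow> 'i set" where
  "supp D = {i. D i \<noteq> 0}"

definition is_fund_on :: "('i::finite \<Rightarrow> 'i \<Rightarrow> int) \<Rightarrow> 'i set \<Rightarrow> 'i cycle \<Rightarrow> bool" where
  "is_fund_on M S D \<longleftrightarrow>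
     (let P = (\<lambda>D. pos_cycle D \<and> supp D = S \<and> (\<forall>i\<in>S. inter_comp M D i \<le> 0)) in
      P D \<and> (\<forall>D'. P D' \<longrightarrow> D \<le> D'))"

definition fund_cycle :: "('i::finite \<Rightarrow> 'i \<Rightarrow> int) \<Rightarrow> 'i cycle" where
  "fund_cycle M = (THE D. is_fund_on M UNIV D)"

definition p_f :: "('i::finite \<Rightarrow> 'i \<Rightarrow> int) \<Rightarrow> ('i \<Rightarrow> nat) \<Rightarrow> int" where
  "p_f M g = pa M g (fund_cycle M)"

definition arith_genus :: "('i::finite \<Rightarrow> 'i \<Rightarrow> int) \<Rightarrow> ('i \<Rightarrow> nat) \<Rightarrow> int" where
  "arith_genus M g = (GREATEST a. \<exists>D. pos_cycle D \<and> a = pa M g D)"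

definition Z_min :: "('i::finite \<Rightarrow> 'i \<Rightarrow> int) \<Rightarrow> ('i \<Rightarrow> nat) \<Rightarrow> 'i cycle" where
  "Z_min M g = (THE D.
     (let Z = fund_cycle M; P = (\<lambda>D. pos_cycle D \<and> D \<le> Z \<and> pa M g D = pa M g Z) in
      P D \<and> (\<forall>D'. P D' \<longrightarrow> \<not> D' < D)))"

text \<open>O_{D'}(-C) numerically trivial\<close>
definition num_trivial :: "('i::finite \<Rightarrow> 'i \<Rightarrow> int) \<Rightarrow> 'i cycle \<Rightarrow> 'i cycle \<Rightarrow> bool" where
  "num_trivial M D' C \<longleftrightarrow> (\<forall>i\<in>supp D'. inter_comp M C i = 0)"

definition tyurina :: "('i::finite \<Rightarrow> 'i \<Rightarrow> int) \<Rightarrow> ('i \<Rightarrow> nat) \<Rightarrow> 'i cycle \<Rightarrow> 'i cycle" where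
  "tyurina M g D = (THE D'.
     (let P = (\<lambda>X. pos_cycle X \<and> X < D \<and> num_trivial M X D \<and> pa M g X = pa M g D) in
      P D' \<and> (\<forall>X. P X \<longrightarrow> \<not> D' < X)))"

text \<open>yau_cycle k = D_{k+1}: D_1 = Z, D_{i+1} = Tyurina component of D_i\<close>
fun yau_cycle :: "('i::finite \<Rightarrow> 'i \<Rightarrow> int) \<Rightarrow> ('i \<Rightarrow> nat) \<Rightarrow> nat \<Rightarrow> 'i cycle" where
  "yau_cycle M g 0 = fund_cycle M"
| "yau_cycle M g (Suc k) = tyurina M g (yau_cycle M g k)"

text \<open>length m of the Yau sequence: the index of the first D_m with D_m . Z_min < 0\<close>
definition yau_length :: "('i::finite \<Rightarrow> 'i \<Rightarrow> int) \<Rightarrow> ('i \<Rightarrow> nat) \<Rightarrow> nat" where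
  "yau_length M g = Suc (LEAST k. inter M (yau_cycle M g k) (Z_min M g) < 0)"

definition minus2_curve :: "('i::finite \<Rightarrow> 'i \<Rightarrow> int) \<Rightarrow> ('i \<Rightarrow> nat) \<Rightarrow> 'i \<Rightarrow> bool" where
  "minus2_curve M g i \<longleftrightarrow> g i = 0 \<and> M i i = -2"

definition ess_irreducible :: "('i::finite \<Rightarrow> 'i \<Rightarrow> int) \<Rightarrow> ('i \<Rightarrow> nat) \<Rightarrow> bool" where
  "ess_irreducible M g \<longleftrightarrow>
     (let Z = fund_cycle M in
      \<exists>A. Z A > 0 \<and> \<not> minus2_curve M g A \<and>
        (let k = Z A; R = (\<lambda>i. Z i - (if i = A then k else 0)) in
         (\<forall>i. R i = 0) \<or> (\<forall>i\<in>supp R. minus2_curve M g i)))"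

end

theory Submission
  imports Defs "HOL-Analysis.Analysis" "HOL-Library.Function_Algebras"
begin


lemma det_Ints:
  fixes A :: "real^'n^'n"
  assumes "\<And>i j. A$i$j \<in> \<int>"
  shows "det A \<in> \<int>"
  unfolding det_def using assms by (intro Ints_sum Ints_mult Ints_prod) auto

lemma nef_exists:
  fixes M :: "'i::finite \<Rightarrow> 'i \<Rightarrow> int"
  assumes sym: "\<And>i j. M i j = M j i"
    and offd: "\<And>i j. i \<noteq> j \<Longrightarrow> M i j \<ge> 0"
    and nd: "\<And>x::'i \<Rightarrow> real. (\<exists>i. x i \<noteq> 0) \<Longrightarrow> (\<Sum>i\<in>UNIV. \<Sum>j\<in>UNIV. x i * x j * of_int (M i j)) < 0"
  shows "\<exists>D::'i\<Rightarrow>int. (\<forall>i. D i > 0) \<and> (\<forall>i. inter_comp M D i < 0)"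
proof -
  define Mr :: "real^'i^'i" where "Mr = (\<chi> i j. real_of_int (M i j))"
  have ker: "\<forall>x. Mr *v x = 0 \<longrightarrow> x = 0"
  proof (intro allI impI)
    fix x assume h: "Mr *v x = 0"
    have row: "\<And>i. (\<Sum>j\<in>UNIV. of_int (M i j) * x$j) = 0"
      using h by (simp add: vec_eq_iff matrix_vector_mult_def Mr_def)
    have "(\<Sum>i\<in>UNIV. \<Sum>j\<in>UNIV. x$i * x$j * of_int (M i j)) = (\<Sum>i\<in>UNIV. x$i * (\<Sum>j\<in>UNIV. of_int (M i j) * x$j))"
      by (simp add: sum_distrib_left mult_ac)
    also have "\<dots> = 0" using row by simp
    finally have "\<not> (\<exists>i. x$i \<noteq> 0)" using nd[of "\<lambda>i. x$i"] by auto
    then show "x = 0" by (simp add: vec_eq_iff)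
  qed
  then obtain B where "B ** Mr = mat 1" using matrix_left_invertible_ker by blast
  then have "invertible Mr" unfolding invertible_def using matrix_left_right_inverse by blast
  then have d0: "det Mr \<noteq> 0" using invertible_det_nz by blast
  define b :: "real^'i" where "b = (\<chi> i. -1)"
  define dd where "dd k = det(\<chi> i j. if j=k then b$i else Mr$i$j)" for k
  define x :: "real^'i" where "x = (\<chi> k. dd k / det Mr)"
  have "Mr *v x = b" using cramer[OF d0, of x b] by (simp add: x_def dd_def)
  then have row: "\<And>i. (\<Sum>j\<in>UNIV. of_int (M i j) * x$j) = -1"
    by (simp add: vec_eq_iff matrix_vector_mult_def Mr_def b_def)
  define xm where "xm i = max (- x$i) 0" for i
  define xp where "xp i = max (x$i) 0" for i
  have xsplit: "\<And>i. x$i = xp i - xm i" by (simp add: xp_def xm_def)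
  have "(\<Sum>i\<in>UNIV. \<Sum>j\<in>UNIV. xm i * xm j * of_int (M i j)) =
        (\<Sum>i\<in>UNIV. \<Sum>j\<in>UNIV. xm i * xp j * of_int (M i j)) - (\<Sum>i\<in>UNIV. xm i * (\<Sum>j\<in>UNIV. of_int (M i j) * x$j))"
    by (simp add: xsplit sum_distrib_left sum_subtractf[symmetric] algebra_simps)
  also have "\<dots> \<ge> 0"
  proof -
    have "xm i * xp j * of_int (M i j) \<ge> 0" for i j
    proof (cases "i = j")
      case True then show ?thesis by (simp add: xm_def xp_def)
    next
      case False then show ?thesis using offd[OF False] by (simp add: xm_def xp_def)
    qed
    then have "(\<Sum>i\<in>UNIV. \<Sum>j\<in>UNIV. xm i * xp j * of_int (M i j)) \<ge> 0"
      by (intro sum_nonneg) auto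
    moreover have "(\<Sum>i\<in>UNIV. xm i * (\<Sum>j\<in>UNIV. of_int (M i j) * x$j)) \<le> 0"
      using row by (simp add: xm_def sum_nonpos)
    ultimately show ?thesis by linarith
  qed
  finally have "\<not> (\<exists>i. xm i \<noteq> 0)" using nd[of xm] by auto
  then have xnn: "\<And>i. x$i \<ge> 0" unfolding xm_def by (metis max.absorb_iff2 max.commute neg_le_0_iff_le)
  have xpos: "x$i > 0" for i
  proof (rule ccontr)
    assume "\<not> x$i > 0"
    then have xi: "x$i = 0" using xnn[of i] by linarith
    have "(\<Sum>j\<in>UNIV. of_int (M i j) * x$j) \<ge> 0"
    proof (intro sum_nonneg)
      fix j assume "j \<in> (UNIV::'i set)"
      show "of_int (M i j) * x$j \<ge> 0"
        by (cases "i = j") (use xi offd[of i j] xnn[of j] in auto)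
    qed
    then show False using row[of i] by simp
  qed
  have ddI: "dd k \<in> \<int>" for k
    unfolding dd_def by (rule det_Ints) (auto simp: b_def Mr_def)
  have detI: "det Mr \<in> \<int>" by (rule det_Ints) (auto simp: Mr_def)
  obtain dl where dl: "det Mr = of_int dl" using detI Ints_cases by metis
  have "\<forall>k. \<exists>z. dd k = of_int z" using ddI Ints_cases by metis
  then obtain dI where dI: "\<And>k. dd k = of_int (dI k)" by metis
  define D where "D k = (if dl > 0 then dI k else - dI k)" for k
  have Dreal: "real_of_int (D k) = \<bar>det Mr\<bar> * x$k" for k
  proof -
    have xk: "x$k * det Mr = dd k" using d0 by (simp add: x_def)
    show ?thesis
    proof (cases "dl > 0")
      case True
      then have "\<bar>det Mr\<bar> = det Mr" using dl by simp
      then show ?thesis using True xk by (simp add: D_def dI mult.commute)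
    next
      case False
      then have "\<bar>det Mr\<bar> = - det Mr" using dl by simp
      then show ?thesis using False xk by (simp add: D_def dI mult.commute)
    qed
  qed
  have "D i > 0" for i
  proof -
    have "real_of_int (D i) > 0" using Dreal[of i] xpos[of i] d0 by simp
    then show ?thesis by simp
  qed
  moreover have "inter_comp M D i < 0" for i
  proof -
    have "real_of_int (inter_comp M D i) = \<bar>det Mr\<bar> * (\<Sum>j\<in>UNIV. of_int (M i j) * x$j)"
      by (simp add: inter_comp_def Dreal sum_distrib_left sym[of _ i] mult_ac)
    also have "\<dots> < 0" using row[of i] d0 by simp
    finally show ?thesis by simp
  qed
  ultimately show ?thesis by blast
qed


lemma ex_least_sum:
  fixes S :: "('i::finite \<Rightarrow> int) set"
  assumes "D \<in> S" "\<And>D i. D \<in> S \<Longrightarrow> D i > 0"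
  shows "\<exists>D0\<in>S. \<forall>D\<in>S. (\<Sum>i\<in>UNIV. D0 i) \<le> (\<Sum>i\<in>UNIV. D i)"
proof -
  obtain D0 where "D0 \<in> S" "\<forall>D. D \<in> S \<longrightarrow> nat (\<Sum>i\<in>UNIV. D0 i) \<le> nat (\<Sum>i\<in>UNIV. D i)"
    using ex_has_least_nat[of "\<lambda>D. D \<in> S" D "\<lambda>D. nat (\<Sum>i\<in>UNIV. D i)"] assms(1) by blast
  moreover have "\<And>D. D \<in> S \<Longrightarrow> (\<Sum>i\<in>UNIV. D i) \<ge> 0" using assms(2) by (meson less_imp_le sum_nonneg)
  ultimately show ?thesis by (metis nat_le_eq_zle)
qed

lemma fund_exists:
  fixes M :: "'i::finite \<Rightarrow> 'i \<Rightarrow> int"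
  assumes sym: "\<And>i j. M i j = M j i"
    and offd: "\<And>i j. i \<noteq> j \<Longrightarrow> M i j \<ge> 0"
    and nd: "\<And>x::'i \<Rightarrow> real. (\<exists>i. x i \<noteq> 0) \<Longrightarrow> (\<Sum>i\<in>UNIV. \<Sum>j\<in>UNIV. x i * x j * of_int (M i j)) < 0"
  shows "is_fund_on M UNIV (fund_cycle M)"
proof -
  define S where "S = {D::'i\<Rightarrow>int. (\<forall>i. D i > 0) \<and> (\<forall>i. inter_comp M D i \<le> 0)}"
  have Pchar: "(pos_cycle D \<and> supp D = UNIV \<and> (\<forall>i\<in>UNIV. inter_comp M D i \<le> 0)) \<longleftrightarrow> D \<in> S" for D
    unfolding S_def pos_cycle_def supp_def by (auto simp: order_less_le)
  have "\<exists>D::'i\<Rightarrow>int. (\<forall>i. D i > 0) \<and> (\<forall>i. inter_comp M D i < 0)"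
    by (rule nef_exists) (fact assms(1), fact assms(2), fact assms(3))
  then obtain D1 where D1: "\<forall>i. D1 i > 0" "\<forall>i. inter_comp M D1 i < 0" by blast
  then have "D1 \<in> S" unfolding S_def by (simp add: less_imp_le)
  then obtain D0 where D0S: "D0 \<in> S" and D0min: "\<forall>D\<in>S. (\<Sum>i\<in>UNIV. D0 i) \<le> (\<Sum>i\<in>UNIV. D i)"
    using ex_least_sum[of D1 S] unfolding S_def by blast
  have le: "D0 \<le> D" if DS: "D \<in> S" for D
  proof -
    define N where "N i = min (D0 i) (D i)" for i
    have "N \<in> S" unfolding S_def
    proof (intro CollectI conjI allI)
      fix i show "N i > 0" using D0S DS by (simp add: N_def S_def)
    next
      fix i
      have key: "inter_comp M N i \<le> inter_comp M X i" if "X \<in> S" "N i = X i" "\<forall>j. N j \<le> X j" for X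
        unfolding inter_comp_def
      proof (intro sum_mono)
        fix j assume "j \<in> (UNIV::'i set)"
        show "N j * M j i \<le> X j * M j i"
          using that offd[of j i] by (cases "j = i") (auto intro: mult_right_mono)
      qed
      show "inter_comp M N i \<le> 0"
      proof (cases "D0 i \<le> D i")
        case True
        then have "inter_comp M N i \<le> inter_comp M D0 i" using key[OF D0S] by (auto simp: N_def)
        moreover have "inter_comp M D0 i \<le> 0" using D0S by (simp add: S_def)
        ultimately show ?thesis by linarith
      next
        case False
        then have "inter_comp M N i \<le> inter_comp M D i" using key[OF DS] by (auto simp: N_def)
        moreover have "inter_comp M D i \<le> 0" using DS by (simp add: S_def)
        ultimately show ?thesis by linarith
      qed
    qed
    then have "(\<Sum>i\<in>UNIV. D0 i) \<le> (\<Sum>i\<in>UNIV. N i)" using D0min by blast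
    moreover have "N \<le> D0" by (simp add: N_def le_fun_def)
    ultimately have "N = D0"
    proof -
      assume s: "(\<Sum>i\<in>UNIV. D0 i) \<le> (\<Sum>i\<in>UNIV. N i)" and nl: "N \<le> D0"
      show "N = D0"
      proof (rule ccontr)
        assume "N \<noteq> D0"
        then obtain i where "N i \<noteq> D0 i" by blast
        then have "N i < D0 i" using nl by (simp add: le_fun_def order_less_le)
        then have "(\<Sum>i\<in>UNIV. N i) < (\<Sum>i\<in>UNIV. D0 i)"
          using nl by (intro sum_strict_mono_ex1) (auto simp: le_fun_def)
        then show False using s by simp
      qed
    qed
    then show ?thesis unfolding le_fun_def by (metis N_def min.cobounded2)
  qed
  have fD0: "is_fund_on M UNIV D0"
    unfolding is_fund_on_def Let_def
  proof (intro conjI allI impI)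
    show "pos_cycle D0" "supp D0 = UNIV" "\<forall>i\<in>UNIV. inter_comp M D0 i \<le> 0" using Pchar[of D0] D0S by auto
  next
    fix D' assume "pos_cycle D' \<and> supp D' = UNIV \<and> (\<forall>i\<in>UNIV. inter_comp M D' i \<le> 0)"
    then show "D0 \<le> D'" using Pchar[of D'] le by auto
  qed
  have "fund_cycle M = D0" unfolding fund_cycle_def
  proof (rule the_equality[where P="is_fund_on M UNIV", OF fD0])
    fix D assume "is_fund_on M UNIV D"
    then have "D \<in> S" "D \<le> D0" unfolding is_fund_on_def Let_def using Pchar[of D] Pchar[of D0] D0S by auto
    then show "D = D0" using le by (simp add: order_antisym)
  qed
  then show ?thesis using fD0 by simp
qed



lemma sum_neg1:
  fixes t :: "'a \<Rightarrow> int"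
  assumes "finite S" "\<And>x. x \<in> S \<Longrightarrow> t x \<le> 0" "sum t S = -1"
  shows "\<exists>E\<in>S. t E = -1 \<and> (\<forall>F\<in>S. F \<noteq> E \<longrightarrow> t F = 0)"
proof -
  obtain E where E: "E \<in> S" "t E \<noteq> 0"
    using assms(3) by (metis neg_equal_0_iff_equal sum.neutral zero_neq_one)
  have split: "sum t S = t E + sum t (S - {E})" using assms(1) E(1) by (simp add: sum.remove)
  have rest: "sum t (S - {E}) \<le> 0" using assms(2) by (auto intro: sum_nonpos)
  have "t E = -1" using split rest assms(2)[OF E(1)] E(2) assms(3) by linarith
  then have r0: "sum t (S - {E}) = 0" using split assms(3) by simp
  have "\<forall>F\<in>S - {E}. t F = 0"
  proof -
    have "sum (\<lambda>x. - t x) (S - {E}) = 0" using r0 by (simp add: sum_negf)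
    moreover have "\<forall>F\<in>S - {E}. - t F \<ge> 0" using assms(2) by auto
    ultimately show ?thesis using assms(1) sum_nonneg_eq_0_iff[of "S - {E}" "\<lambda>x. - t x"] by auto
  qed
  then show ?thesis using E(1) \<open>t E = -1\<close> by blast
qed

lemma sum_if_mults: "(\<Sum>x\<in>UNIV. (if x = a then (s::int) else 0) * f x) = s * f (a::'a::finite)"
proof -
  have "(\<lambda>x. (if x = a then (s::int) else 0) * f x) = (\<lambda>x. if x = a then s * f x else 0)" by auto
  then show ?thesis by (subst \<open>_ = _\<close>) simp
qed

lemma sum_if_mult: "(\<Sum>x\<in>UNIV. (if x = a then (1::int) else 0) * f x) = f (a::'a::finite)"
  using sum_if_mults[of a 1 f] by simp

locale cfg =
  fixes M :: "'i::finite \<Rightarrow> 'i \<Rightarrow> int" and g :: "'i \<Rightarrow> nat" and A :: 'i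
  assumes symM: "\<And>i j. M i j = M j i"
    and offd: "\<And>i j. i \<noteq> j \<Longrightarrow> M i j \<ge> 0"
    and nd: "\<And>x::'i \<Rightarrow> real. (\<exists>i. x i \<noteq> 0) \<Longrightarrow> (\<Sum>i\<in>UNIV. \<Sum>j\<in>UNIV. x i * x j * of_int (M i j)) < 0"
    and ZZ: "inter M (fund_cycle M) (fund_cycle M) = -1"
    and ppos: "pa M g (fund_cycle M) > 0"
    and m2: "\<And>i. i \<noteq> A \<Longrightarrow> g i = 0 \<and> M i i = -2"
begin

abbreviation "Z \<equiv> fund_cycle M"

definition e :: "'i \<Rightarrow> 'i cycle" where "e i = (\<lambda>j. if j = i then 1 else 0)"
definition Q :: "'i cycle \<Rightarrow> int" where "Q D = inter M D D + canon M g D"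
definition kap :: int where "kap = 2 * int (g A) - 2 - M A A"
definition p :: int where "p = pa M g Z"

lemma fund: "is_fund_on M UNIV Z"
  by (rule fund_exists) (fact symM, fact offd, fact nd)

lemma inter_alt: "inter M C D = (\<Sum>j\<in>UNIV. D j * inter_comp M C j)"
  unfolding inter_def inter_comp_def
  by (subst sum.swap) (simp add: sum_distrib_left mult_ac)

lemma inter_sym: "inter M C D = inter M D C"
  unfolding inter_def by (subst sum.swap) (simp add: symM mult_ac)

lemma inter_alt2: "inter M C D = (\<Sum>i\<in>UNIV. C i * inter_comp M D i)"
  using inter_alt[of D C] inter_sym by simp

lemma ic_add: "inter_comp M (C + D) k = inter_comp M C k + inter_comp M D k"
  by (simp add: inter_comp_def algebra_simps sum.distrib)
lemma ic_diff: "inter_comp M (C - D) k = inter_comp M C k - inter_comp M D k"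
  by (simp add: inter_comp_def algebra_simps sum_subtractf)
lemma ic_e: "inter_comp M (e i) k = M i k"
  by (simp add: inter_comp_def e_def sum_if_mult)

lemma inter_add_left: "inter M (C + D) W = inter M C W + inter M D W"
  by (simp add: inter_alt ic_add algebra_simps sum.distrib)
lemma inter_diff_left: "inter M (C - D) W = inter M C W - inter M D W"
  by (simp add: inter_alt ic_diff algebra_simps sum_subtractf)
lemma inter_add_right: "inter M W (C + D) = inter M W C + inter M W D"
  using inter_add_left inter_sym by metis
lemma inter_diff_right: "inter M W (C - D) = inter M W C - inter M W D"
  using inter_diff_left inter_sym by metis
lemma inter_e_right: "inter M D (e i) = inter_comp M D i"
  by (simp add: inter_alt e_def sum_if_mult)
lemma inter_e_e: "inter M (e i) (e j) = M i j"
  by (simp add: inter_e_right ic_e)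

lemma inter_lin_left:
  "inter M (\<lambda>F. \<Sum>k\<in>S. c k * W k F) V = (\<Sum>k\<in>S. c k * inter M (W k) V)"
  unfolding inter_alt2
  by (simp add: sum_distrib_right sum_distrib_left mult_ac) (rule sum.swap)

lemma inter_lin_right:
  "inter M V (\<lambda>F. \<Sum>k\<in>S. c k * W k F) = (\<Sum>k\<in>S. c k * inter M V (W k))"
  using inter_lin_left[of c W S V] inter_sym by simp

lemma canon_add: "canon M g (C + D) = canon M g C + canon M g D"
  by (simp add: canon_def distrib_right sum.distrib)
lemma canon_diff: "canon M g (C - D) = canon M g C - canon M g D"
  by (simp add: canon_def left_diff_distrib sum_subtractf)

lemma Q_add: "Q (X + Y) = Q X + Q Y + 2 * inter M X Y"
  unfolding Q_def by (simp add: inter_add_left inter_add_right canon_add inter_sym[of Y X])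

lemma nd_int: "(\<exists>i. X i \<noteq> 0) \<Longrightarrow> inter M X X < 0"
proof -
  assume "\<exists>i. X i \<noteq> 0"
  then have "(\<Sum>i\<in>UNIV. \<Sum>j\<in>UNIV. real_of_int (X i) * real_of_int (X j) * of_int (M i j)) < 0"
    by (intro nd) auto
  then have "real_of_int (inter M X X) < 0" by (simp add: inter_def)
  then show ?thesis by simp
qed

lemma nd_le: "inter M X X \<le> 0"
proof (cases "\<exists>i. X i \<noteq> 0")
  case True then show ?thesis using nd_int[of X] by simp
next
  case False then show ?thesis by (simp add: inter_def)
qed

lemma nd_zero: "inter M X X \<ge> 0 \<Longrightarrow> X = 0"
  using nd_int by fastforce

lemma Q_even: "even (Q D)"
proof -
  have "even (Q (\<lambda>i. if i \<in> S then D i else 0))" if "finite S" for S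
    using that
  proof (induction S rule: finite_induct)
    case empty
    then show ?case by (simp add: Q_def inter_def canon_def)
  next
    case (insert x S)
    define s where "s = D x"
    have eq: "(\<lambda>i. if i \<in> insert x S then D i else 0) = (\<lambda>i. if i \<in> S then D i else 0) + (\<lambda>i. if i = x then s else 0)"
      using insert(2) by (auto simp: s_def plus_fun_def)
    have q1: "Q (\<lambda>i. if i = x then s else 0) = s * s * M x x + s * (2 * int (g x) - 2 - M x x)"
      by (simp add: Q_def inter_alt2 inter_comp_def canon_def sum_if_mults)
    have "even (s * s * M x x + s * (2 * int (g x) - 2 - M x x))"
    proof -
      have "s * s * M x x + s * (2 * int (g x) - 2 - M x x) = (s * s - s) * M x x + 2 * (s * (int (g x) - 1))"
        by (simp add: algebra_simps)
      moreover have "s * s - s = s * (s - 1)" by (simp add: algebra_simps)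
      moreover have "even (s * (s - 1))" by (cases "even s") auto
      ultimately show ?thesis by simp
    qed
    then show ?case unfolding eq Q_add using insert(3) q1 by simp
  qed
  from this[of UNIV] show ?thesis by simp
qed

lemma pa_Q: "2 * (pa M g D - 1) = Q D"
  unfolding pa_def Q_def using Q_even[of D] by (simp add: Q_def)

lemma canon_A: "canon M g D = kap * D A"
proof -
  have "canon M g D = (\<Sum>i\<in>UNIV. if i = A then D A * kap else 0)"
    unfolding canon_def kap_def by (intro sum.cong) (auto dest: m2)
  then show ?thesis by simp
qed

end


context cfg begin

definition good :: "'i cycle \<Rightarrow> bool" where
  "good D \<longleftrightarrow> (\<forall>F. D F \<ge> 0) \<and> D A > 0 \<and> (\<forall>F. D F > 0 \<longrightarrow> inter_comp M D F \<le> 0)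
     \<and> inter M D D = -1 \<and> Q D = 2 * p - 2"

definition critP :: "'i cycle \<Rightarrow> 'i \<Rightarrow> bool" where
  "critP D E \<longleftrightarrow> D E = 1 \<and> inter_comp M D E = -1 \<and> (\<forall>F. D F > 0 \<and> F \<noteq> E \<longrightarrow> inter_comp M D F = 0)"

definition crit :: "'i cycle \<Rightarrow> 'i" where "crit D = (SOME E. critP D E)"

lemma good_critP: assumes "good D" shows "\<exists>E. critP D E"
proof -
  define t where "t i = D i * inter_comp M D i" for i
  have tle: "t i \<le> 0" for i
  proof (cases "D i > 0")
    case True
    then have "inter_comp M D i \<le> 0" using assms by (simp add: good_def)
    then show ?thesis using True by (simp add: t_def mult_le_0_iff)
  next
    case False
    then have "D i = 0" using assms by (simp add: good_def) (metis order.not_eq_order_implies_strict)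
    then show ?thesis by (simp add: t_def)
  qed
  have "sum t UNIV = -1" using assms by (simp add: good_def t_def inter_alt2[symmetric])
  then obtain E where E: "t E = -1" "\<forall>F. F \<noteq> E \<longrightarrow> t F = 0"
    using sum_neg1[of UNIV t] tle by auto
  have DE: "D E > 0"
  proof (rule ccontr)
    assume "\<not> D E > 0"
    then have "D E = 0" using assms by (simp add: good_def) (metis order.not_eq_order_implies_strict)
    then show False using E(1) by (simp add: t_def)
  qed
  have "D E * (- inter_comp M D E) = 1" using E(1) by (simp add: t_def)
  then have c: "D E = 1 \<and> - inter_comp M D E = 1" using DE pos_zmult_eq_1_iff by blast
  have "\<forall>F. D F > 0 \<and> F \<noteq> E \<longrightarrow> inter_comp M D F = 0"
    using E(2) by (auto simp: t_def)
  then show ?thesis using c unfolding critP_def by (intro exI[of _ E]) auto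
qed

lemma crit: "good D \<Longrightarrow> critP D (crit D)"
  unfolding crit_def using good_critP by (rule someI_ex)

lemma crit_props:
  assumes "good D"
  shows "D (crit D) = 1" "inter_comp M D (crit D) = -1"
    "\<And>F. D F > 0 \<Longrightarrow> F \<noteq> crit D \<Longrightarrow> inter_comp M D F = 0"
  using crit[OF assms] unfolding critP_def by auto

lemma e_simps: "e i i = 1" "j \<noteq> i \<Longrightarrow> e i j = 0"
  by (auto simp: e_def)

lemma canon_e: "i \<noteq> A \<Longrightarrow> canon M g (e i) = 0"
  by (simp add: canon_A e_def)

lemma good_step:
  assumes gD: "good D" and cA: "crit D \<noteq> A"
  shows "good (D - e (crit D))"
proof -
  define E where "E = crit D"
  have m: "M E E = -2" using m2[OF cA] by (simp add: E_def)
  have DE: "D E = 1" "inter_comp M D E = -1" using crit_props[OF gD] by (auto simp: E_def)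
  have z: "\<And>F. D F > 0 \<Longrightarrow> F \<noteq> E \<Longrightarrow> inter_comp M D F = 0" using crit_props(3)[OF gD] by (simp add: E_def)
  have nn: "\<forall>F. (D - e E) F \<ge> 0"
  proof
    fix F show "(D - e E) F \<ge> 0"
      using gD DE by (cases "F = E") (auto simp: good_def e_def)
  qed
  have AA: "(D - e E) A > 0" using gD cA by (simp add: good_def e_def E_def)
  have nef: "\<forall>F. (D - e E) F > 0 \<longrightarrow> inter_comp M (D - e E) F \<le> 0"
  proof (intro allI impI)
    fix F assume h: "(D - e E) F > 0"
    then have FE: "F \<noteq> E" using DE by (auto simp: e_def)
    then have "D F > 0" using h by (simp add: e_def)
    then have "inter_comp M D F = 0" using z FE by simp
    then show "inter_comp M (D - e E) F \<le> 0" using offd[of E F] FE by (simp add: ic_diff ic_e)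
  qed
  have ii: "inter M (D - e E) (D - e E) = -1"
    using gD DE m by (simp add: good_def inter_diff_left inter_diff_right inter_e_right inter_e_e inter_sym[of "e E" D] ic_diff ic_e)
  have "canon M g (D - e E) = canon M g D"
    using canon_e[of E] cA by (simp add: canon_diff E_def)
  then have "Q (D - e E) = Q D" using ii gD by (simp add: Q_def good_def)
  then show ?thesis using nn AA nef ii gD unfolding E_def good_def by simp
qed

primrec seq :: "nat \<Rightarrow> 'i cycle" where
  "seq 0 = Z"
| "seq (Suc k) = (if crit (seq k) = A then seq k else seq k - e (crit (seq k)))"

lemma Z_props: "pos_cycle Z" "supp Z = UNIV" "\<And>i. inter_comp M Z i \<le> 0"
  using fund unfolding is_fund_on_def Let_def by auto

lemma Z_pos: "Z i > 0"
proof -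
  have "Z i \<noteq> 0" using Z_props(2) unfolding supp_def by auto
  moreover have "Z i \<ge> 0" using Z_props(1) unfolding pos_cycle_def by auto
  ultimately show ?thesis by simp
qed

lemma p_pos: "p > 0" using ppos by (simp add: p_def)

lemma good_Z: "good Z"
  unfolding good_def using Z_pos Z_props(3) ZZ pa_Q[of Z] by (auto simp: p_def less_imp_le)

lemma good_seq: "good (seq k)"
  by (induction k) (auto simp: good_Z good_step)

lemma seq_A: "seq k A = Z A"
proof (induction k)
  case (Suc k) then show ?case
    using crit_props(1)[OF good_seq[of k]] by (auto simp: e_def)
qed simp

lemma sum_e: "(\<Sum>i\<in>UNIV. e E i) = 1"
  by (simp add: e_def)

lemma crit_ex: "\<exists>k. crit (seq k) = A"
proof (rule ccontr)
  assume h: "\<not> (\<exists>k. crit (seq k) = A)"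
  have s: "(\<Sum>i\<in>UNIV. seq k i) = (\<Sum>i\<in>UNIV. Z i) - int k" for k
  proof (induction k)
    case (Suc k)
    have "(\<Sum>i\<in>UNIV. seq (Suc k) i) = (\<Sum>i\<in>UNIV. seq k i - e (crit (seq k)) i)"
      using h by simp
    also have "\<dots> = (\<Sum>i\<in>UNIV. seq k i) - 1" by (simp add: sum_subtractf sum_e)
    finally show ?case using Suc by simp
  qed simp
  have "(\<Sum>i\<in>UNIV. seq k i) \<ge> 0" for k using good_seq[of k] by (simp add: good_def sum_nonneg)
  define K where "K = nat (\<Sum>i\<in>UNIV. Z i) + 1"
  have a: "(\<Sum>i\<in>UNIV. seq K i) = (\<Sum>i\<in>UNIV. Z i) - int K" by (rule s)
  have b: "(\<Sum>i\<in>UNIV. seq K i) \<ge> 0" by fact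
  have "int K > (\<Sum>i\<in>UNIV. Z i)" unfolding K_def by linarith
  then show False using a b by linarith
qed

definition n :: nat where "n = (LEAST k. crit (seq k) = A)"

abbreviation c where "c k \<equiv> crit (seq k)"

lemma crit_n: "c n = A"
  unfolding n_def using crit_ex by (rule LeastI_ex)

lemma crit_lt: "k < n \<Longrightarrow> c k \<noteq> A"
  unfolding n_def using not_less_Least by blast

lemma seq_Suc_lt: "k < n \<Longrightarrow> seq (Suc k) = seq k - e (c k)"
  using crit_lt by simp

lemma seq_A1: "seq k A = 1"
  using crit_props(1)[OF good_seq[of n]] crit_n seq_A by metis

lemma seq_Suc_le: "seq (Suc k) \<le> seq k"
  by (auto simp: le_fun_def e_def)

lemma seq_mono: "k \<le> j \<Longrightarrow> seq j \<le> seq k"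
  using lift_Suc_antimono_le[of seq, OF seq_Suc_le] by blast

lemma seq_nn: "seq k F \<ge> 0"
  using good_seq[of k] by (simp add: good_def)

lemma supp_lemma:
  assumes "k < j" "k < n" "seq j F > 0"
  shows "seq k F > 0 \<and> F \<noteq> c k"
proof -
  have "seq j F \<le> seq (Suc k) F" using seq_mono[of "Suc k" j] assms(1) by (simp add: le_fun_def)
  then have h: "seq (Suc k) F > 0" using assms(3) by simp
  have ck1: "seq k (c k) = 1" using crit_props(1)[OF good_seq] .
  have "F \<noteq> c k" using h ck1 seq_Suc_lt[OF assms(2)] by (auto simp: e_def)
  moreover have "seq k F > 0" using h seq_Suc_le[of k] by (simp add: le_fun_def) (meson less_le_trans)
  ultimately show ?thesis by simp
qed

lemma ic_zero: "seq k F > 0 \<Longrightarrow> F \<noteq> c k \<Longrightarrow> inter_comp M (seq k) F = 0"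
  using crit_props(3)[OF good_seq] by blast

lemma orth: assumes "k < j" "j \<le> n" shows "inter M (seq k) (seq j) = 0"
proof -
  have h: "seq j F * inter_comp M (seq k) F = 0" for F
  proof (cases "seq j F > 0")
    case True
    then show ?thesis using supp_lemma[OF assms(1) _ True] assms ic_zero by simp
  next
    case False
    then have "seq j F = 0" using seq_nn[of j F] by simp
    then show ?thesis by simp
  qed
  show ?thesis unfolding inter_alt by (rule sum.neutral) (use h in blast)
qed

lemma orthn: assumes "k \<le> n" "j \<le> n" shows "inter M (seq k) (seq j) = (if k = j then -1 else 0)"
proof (cases "k = j")
  case True then show ?thesis using good_seq[of k] by (simp add: good_def)
next
  case False
  then have "k < j \<or> j < k" by arith
  then show ?thesis using orth[of k j] orth[of j k] inter_sym[of "seq k" "seq j"] assms False by auto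
qed

lemma kap_val: "kap = 2 * p - 1"
proof -
  have "Q (seq n) = 2 * p - 2" "inter M (seq n) (seq n) = -1" using good_seq[of n] by (auto simp: good_def)
  moreover have "canon M g (seq n) = kap" using canon_A seq_A1 by simp
  ultimately show ?thesis by (simp add: Q_def)
qed

end


context cfg begin

lemma ic_nonneg_out: assumes "seq k F = 0" shows "inter_comp M (seq k) F \<ge> 0"
  unfolding inter_comp_def
proof (intro sum_nonneg)
  fix G assume "G \<in> (UNIV::'i set)"
  show "seq k G * M G F \<ge> 0"
    using assms seq_nn[of k G] offd[of G F] by (cases "G = F") auto
qed

lemma ic_Suc_lt: assumes "k < n" shows "inter_comp M (seq (Suc k)) F = inter_comp M (seq k) F - M (c k) F"
  using seq_Suc_lt[OF assms] by (simp add: ic_diff ic_e del: seq.simps)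

lemma sumic: "(\<Sum>k\<in>{..n}. inter_comp M (seq k) F) = (if F = A then -1 else 0)"
proof (cases "seq n F > 0")
  case True
  have v: "inter_comp M (seq k) F = (if k = n then (if F = A then -1 else 0) else 0)" if "k \<in> {..n}" for k
  proof (cases "k = n")
    case True
    then show ?thesis using \<open>seq n F > 0\<close> crit_n crit_props(2)[OF good_seq[of n]] ic_zero[of n F] by auto
  next
    case False
    then have "k < n" using that by simp
    then have "seq k F > 0 \<and> F \<noteq> c k" using supp_lemma[of k n F] \<open>seq n F > 0\<close> by simp
    then show ?thesis using ic_zero False by simp
  qed
  have "(\<Sum>k\<in>{..n}. inter_comp M (seq k) F) = (\<Sum>k\<in>{..n}. (if k = n then (if F = A then -1 else 0) else 0))"
    by (rule sum.cong) (use v in auto)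
  then show ?thesis by simp
next
  case False
  then have sn0: "seq n F = 0" using seq_nn[of n F] by simp
  define i0 where "i0 = (LEAST i. seq i F = 0)"
  have i0z: "seq i0 F = 0" unfolding i0_def using sn0 by (rule LeastI)
  have i0n: "i0 \<le> n" unfolding i0_def using sn0 by (rule Least_le)
  have i0pos: "i0 \<noteq> 0"
  proof
    assume "i0 = 0" then show False using i0z Z_pos[of F] by simp
  qed
  define j where "j = i0 - 1"
  have Sj: "Suc j = i0" using i0pos by (simp add: j_def)
  have jn: "j < n" using Sj i0n by simp
  have sjF: "seq j F > 0"
  proof -
    have "j < i0" using Sj by simp
    then have "seq j F \<noteq> 0" unfolding i0_def by (rule not_less_Least)
    then show ?thesis using seq_nn[of j F] by simp
  qed
  have Fcj: "F = c j"
  proof (rule ccontr)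
    assume "F \<noteq> c j"
    then have "seq (Suc j) F = seq j F" using seq_Suc_lt[OF jn] by (simp add: e_def)
    then show False using i0z Sj sjF by simp
  qed
  have FA: "F \<noteq> A" using sn0 seq_A1[of n] by auto
  have mFF: "M F F = -2" using m2[OF FA] by simp
  have vlt: "inter_comp M (seq k) F = 0" if "k < j" for k
    using supp_lemma[OF that _ sjF] that jn ic_zero by simp
  have vj: "inter_comp M (seq j) F = -1" using Fcj crit_props(2)[OF good_seq[of j]] by simp
  have vSj: "inter_comp M (seq (Suc j)) F = 1" using ic_Suc_lt[OF jn, of F] vj Fcj mFF by simp
  have vbig: "k \<le> n \<longrightarrow> inter_comp M (seq k) F = 0" if "j + 2 \<le> k" for k
    using that
  proof (induction k rule: nat_induct_at_least)
    case base
    show ?case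
    proof
      assume h: "j + 2 \<le> n"
      then have j1n: "Suc j < n" by simp
      have a: "seq (Suc j) (c (Suc j)) = 1" using crit_props(1)[OF good_seq] .
      then have b: "seq j (c (Suc j)) > 0 \<and> c (Suc j) \<noteq> c j" using supp_lemma[of j "Suc j" "c (Suc j)"] jn by simp
      then have "inter_comp M (seq j) (c (Suc j)) = 0" using ic_zero by blast
      moreover have "inter_comp M (seq (Suc j)) (c (Suc j)) = -1" using crit_props(2)[OF good_seq] .
      ultimately have "M (c j) (c (Suc j)) = 1" using ic_Suc_lt[OF jn, of "c (Suc j)"] by simp
      then have "M (c (Suc j)) F = 1" using Fcj symM by metis
      then show "inter_comp M (seq (j + 2)) F = 0"
        using ic_Suc_lt[OF j1n, of F] vSj by (simp add: numeral_2_eq_2)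
    qed
  next
    case (Suc k)
    show ?case
    proof
      assume h: "Suc k \<le> n"
      then have kn: "k < n" by simp
      have "seq k F \<le> seq (Suc j) F" using seq_mono[of "Suc j" k] Suc(1) by (simp add: le_fun_def)
      then have skF: "seq k F = 0" using i0z Sj seq_nn[of k F] by simp
      have "seq (Suc k) F \<le> seq k F" using seq_Suc_le[of k] by (simp add: le_fun_def)
      then have sSkF: "seq (Suc k) F = 0" using skF seq_nn[of "Suc k" F] by simp
      have ckF: "c k \<noteq> F" using crit_props(1)[OF good_seq[of k]] skF by auto
      have "inter_comp M (seq (Suc k)) F = inter_comp M (seq k) F - M (c k) F" using ic_Suc_lt[OF kn] .
      then have "inter_comp M (seq (Suc k)) F \<le> 0" using Suc(2) kn offd[OF ckF] by simp
      moreover have "inter_comp M (seq (Suc k)) F \<ge> 0" using ic_nonneg_out[OF sSkF] .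
      ultimately show "inter_comp M (seq (Suc k)) F = 0" by simp
    qed
  qed
  have v: "inter_comp M (seq k) F = (if k = Suc j then 1 else 0) - (if k = j then 1 else 0)" if "k \<in> {..n}" for k
  proof -
    have "k < j \<or> k = j \<or> k = Suc j \<or> j + 2 \<le> k" by arith
    then show ?thesis using vlt vj vSj vbig that by auto
  qed
  have "(\<Sum>k\<in>{..n}. inter_comp M (seq k) F) = (\<Sum>k\<in>{..n}. (if k = Suc j then 1 else 0) - (if k = j then (1::int) else 0))"
    by (rule sum.cong) (use v in auto)
  also have "\<dots> = 0" using jn by (simp add: sum_subtractf)
  finally show ?thesis using FA by simp
qed

lemma decomp:
  assumes "\<forall>F. Y F \<ge> 0" "Y \<le> seq k" "Y (c k) = seq k (c k)"
  shows "Q (seq k) = Q Y - inter M (seq k - Y) (seq k - Y) + kap * (seq k - Y) A"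
proof -
  define X where "X = seq k - Y"
  have X0: "X (c k) = 0" using assms(3) by (simp add: X_def)
  have h: "X F * inter_comp M (seq k) F = 0" for F
  proof (cases "X F = 0")
    case False
    then have "seq k F > Y F" using assms(2) by (simp add: X_def le_fun_def order_less_le)
    then have "seq k F > 0" using assms(1) by (meson le_less_trans)
    moreover have "F \<noteq> c k" using X0 False by auto
    ultimately show ?thesis using ic_zero by simp
  qed simp
  have i0: "inter M (seq k) X = 0" unfolding inter_alt by (rule sum.neutral) (use h in blast)
  have sk: "seq k = Y + X" by (simp add: X_def)
  have "Q (seq k) = Q Y + Q X + 2 * inter M Y X" by (subst sk) (rule Q_add)
  moreover have "Q X = inter M X X + kap * X A" by (simp add: Q_def canon_A)
  moreover have "inter M Y X = - inter M X X"
  proof -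
    have "Y = seq k - X" by (simp add: X_def)
    then have "inter M Y X = inter M (seq k) X - inter M X X" by (simp add: inter_diff_left)
    then show ?thesis using i0 by simp
  qed
  ultimately show ?thesis by (simp add: X_def)
qed

lemma zmin_key:
  assumes "k \<le> n"
  shows "\<forall>Y. (\<forall>F. Y F \<ge> 0) \<and> (\<exists>F. Y F \<noteq> 0) \<and> Y \<le> seq k \<and> Q Y = 2 * p - 2 \<longrightarrow> seq n \<le> Y"
  using assms
proof (induction k rule: inc_induct)
  case base
  show ?case
  proof (intro allI impI)
    fix Y assume h: "(\<forall>F. Y F \<ge> 0) \<and> (\<exists>F. Y F \<noteq> 0) \<and> Y \<le> seq n \<and> Q Y = 2 * p - 2"
    have YA: "Y A > 0"
    proof (rule ccontr)
      assume "\<not> Y A > 0"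
      then have "Y A = 0" using h by (metis order.not_eq_order_implies_strict)
      then have "Q Y = inter M Y Y" by (simp add: Q_def canon_A)
      moreover have "inter M Y Y < 0" using h nd_int by blast
      ultimately show False using h p_pos by simp
    qed
    have "Y A \<le> seq n A" using h by (simp add: le_fun_def)
    then have YA1: "Y A = seq n A" using YA seq_A1[of n] by simp
    have "Q (seq n) = Q Y - inter M (seq n - Y) (seq n - Y) + kap * (seq n - Y) A"
      using decomp[of Y n] h YA1 crit_n by simp
    then have "inter M (seq n - Y) (seq n - Y) = 0" using h good_seq[of n] YA1 by (simp add: good_def)
    then have "seq n - Y = 0" by (intro nd_zero) simp
    then show "seq n \<le> Y" by (auto simp: fun_eq_iff le_fun_def)
  qed
next
  case (step k)
  show ?case
  proof (intro allI impI)
    fix Y assume h: "(\<forall>F. Y F \<ge> 0) \<and> (\<exists>F. Y F \<noteq> 0) \<and> Y \<le> seq k \<and> Q Y = 2 * p - 2"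
    show "seq n \<le> Y"
    proof (cases "Y (c k) = 0")
      case True
      have "Y \<le> seq (Suc k)"
        using h True seq_Suc_lt[OF step(2)] crit_props(1)[OF good_seq[of k]] by (auto simp: le_fun_def e_def simp del: seq.simps)
      then show ?thesis using step(3) h by blast
    next
      case False
      then have "Y (c k) > 0" using h by (metis order.not_eq_order_implies_strict)
      moreover have "Y (c k) \<le> seq k (c k)" using h by (simp add: le_fun_def)
      ultimately have Yc: "Y (c k) = seq k (c k)" using crit_props(1)[OF good_seq[of k]] by simp
      have "Q (seq k) = Q Y - inter M (seq k - Y) (seq k - Y) + kap * (seq k - Y) A"
        using decomp[of Y k] h Yc by simp
      then have e1: "inter M (seq k - Y) (seq k - Y) = kap * (seq k - Y) A"
        using h good_seq[of k] by (simp add: good_def)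
      have "(seq k - Y) A \<ge> 0" using h by (simp add: le_fun_def)
      moreover have "kap > 0" using kap_val p_pos by simp
      ultimately have "inter M (seq k - Y) (seq k - Y) \<ge> 0" using e1 by simp
      then have "seq k - Y = 0" by (intro nd_zero)
      then have "Y = seq k" by (auto simp: fun_eq_iff)
      then show ?thesis using seq_mono[of k n] step(2) by simp
    qed
  qed
qed

lemma pa_Q2: "pa M g D = 1 + Q D div 2"
  by (simp add: pa_def Q_def)

lemma pa_eq_iff: "pa M g D = pa M g Z \<longleftrightarrow> Q D = 2 * p - 2"
  using pa_Q[of D] by (auto simp: p_def)

lemma pos_iff: "pos_cycle D \<longleftrightarrow> (\<forall>F. D F \<ge> 0) \<and> (\<exists>F. D F \<noteq> 0)"
  by (simp add: pos_cycle_def)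

lemma seqn_P: "pos_cycle (seq n) \<and> seq n \<le> Z \<and> pa M g (seq n) = pa M g Z"
proof -
  have "pos_cycle (seq n)" unfolding pos_iff using seq_nn seq_A1[of n] by (metis zero_neq_one)
  moreover have "seq n \<le> Z" using seq_mono[of 0 n] by simp
  moreover have "Q (seq n) = 2 * p - 2" using good_seq[of n] by (simp add: good_def)
  ultimately show ?thesis using pa_eq_iff by simp
qed

lemma Zmin_eq: "Z_min M g = seq n"
  unfolding Z_min_def Let_def
proof (rule the_equality)
  have lo: "seq n \<le> D" if "pos_cycle D \<and> D \<le> Z \<and> pa M g D = pa M g Z" for D
    using zmin_key[of 0] that unfolding pos_iff pa_eq_iff by simp
  show "(pos_cycle (seq n) \<and> seq n \<le> Z \<and> pa M g (seq n) = pa M g Z) \<and>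
    (\<forall>D'. pos_cycle D' \<and> D' \<le> Z \<and> pa M g D' = pa M g Z \<longrightarrow> \<not> D' < seq n)"
    using seqn_P lo by (auto simp: less_le_not_le)
  fix D assume "(pos_cycle D \<and> D \<le> Z \<and> pa M g D = pa M g Z) \<and>
    (\<forall>D'. pos_cycle D' \<and> D' \<le> Z \<and> pa M g D' = pa M g Z \<longrightarrow> \<not> D' < D)"
  then show "D = seq n" using seqn_P lo by (metis order.not_eq_order_implies_strict)
qed

lemma tyu_eq: assumes kn: "k < n" shows "tyurina M g (seq k) = seq (Suc k)"
  unfolding tyurina_def Let_def
proof (rule the_equality)
  have ck: "seq k (c k) = 1" "inter_comp M (seq k) (c k) = -1" using crit_props[OF good_seq[of k]] by auto
  have up: "X \<le> seq (Suc k)" if "pos_cycle X \<and> X < seq k \<and> num_trivial M X (seq k) \<and> pa M g X = pa M g (seq k)" for X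
  proof -
    have X0: "X (c k) = 0" using that ck(2) unfolding num_trivial_def supp_def by auto
    have Xle: "X \<le> seq k" using that by (simp add: less_imp_le)
    show ?thesis unfolding le_fun_def
    proof
      fix F show "X F \<le> seq (Suc k) F"
      proof (cases "F = c k")
        case True then show ?thesis using X0 seq_nn[of "Suc k" F] by simp
      next
        case False
        then have "seq (Suc k) F = seq k F" using seq_Suc_lt[OF kn] by (simp add: e_def del: seq.simps)
        then show ?thesis using Xle by (simp add: le_fun_def del: seq.simps)
      qed
    qed
  qed
  have P: "pos_cycle (seq (Suc k)) \<and> seq (Suc k) < seq k \<and> num_trivial M (seq (Suc k)) (seq k) \<and> pa M g (seq (Suc k)) = pa M g (seq k)"
  proof (intro conjI)
    show "pos_cycle (seq (Suc k))" unfolding pos_iff using seq_nn seq_A1[of "Suc k"] by (metis zero_neq_one)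
    show "seq (Suc k) < seq k"
    proof -
      have "seq (Suc k) (c k) = 0" using ck seq_Suc_lt[OF kn] by (simp add: e_def)
      then have "seq (Suc k) \<noteq> seq k" using ck by auto
      then show ?thesis using seq_Suc_le[of k] by (simp add: order_less_le)
    qed
    show "num_trivial M (seq (Suc k)) (seq k)"
      unfolding num_trivial_def supp_def
    proof
      fix F assume "F \<in> {i. seq (Suc k) i \<noteq> 0}"
      then have "seq (Suc k) F > 0" using seq_nn[of "Suc k" F] by simp
      then have "seq k F > 0 \<and> F \<noteq> c k" using supp_lemma[of k "Suc k" F] kn by simp
      then show "inter_comp M (seq k) F = 0" using ic_zero by simp
    qed
    show "pa M g (seq (Suc k)) = pa M g (seq k)"
      using good_seq[of k] good_seq[of "Suc k"] pa_Q2 by (simp add: good_def)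
  qed
  show "(pos_cycle (seq (Suc k)) \<and> seq (Suc k) < seq k \<and> num_trivial M (seq (Suc k)) (seq k) \<and> pa M g (seq (Suc k)) = pa M g (seq k)) \<and>
    (\<forall>X. pos_cycle X \<and> X < seq k \<and> num_trivial M X (seq k) \<and> pa M g X = pa M g (seq k) \<longrightarrow> \<not> seq (Suc k) < X)"
    using P up by (auto simp: less_le_not_le)
  fix D assume "(pos_cycle D \<and> D < seq k \<and> num_trivial M D (seq k) \<and> pa M g D = pa M g (seq k)) \<and>
    (\<forall>X. pos_cycle X \<and> X < seq k \<and> num_trivial M X (seq k) \<and> pa M g X = pa M g (seq k) \<longrightarrow> \<not> D < X)"
  then show "D = seq (Suc k)" using P up by (metis order.not_eq_order_implies_strict)
qed

lemma yau_eq: "k \<le> n \<Longrightarrow> yau_cycle M g k = seq k"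
proof (induction k)
  case (Suc k)
  then show ?case using tyu_eq[of k] by simp
qed simp

lemma len_eq: "yau_length M g = Suc n"
proof -
  have "(LEAST k. inter M (yau_cycle M g k) (Z_min M g) < 0) = n"
  proof (rule Least_equality)
    show "inter M (yau_cycle M g n) (Z_min M g) < 0" using yau_eq[of n] Zmin_eq orthn[of n n] by simp
  next
    fix y assume h: "inter M (yau_cycle M g y) (Z_min M g) < 0"
    show "n \<le> y"
    proof (rule ccontr)
      assume "\<not> n \<le> y"
      then have "y < n" by simp
      then show False using h yau_eq[of y] Zmin_eq orthn[of y n] by simp
    qed
  qed
  then show ?thesis by (simp add: yau_length_def)
qed

end


lemma quad_bound: "(2 * p - 1) * a - a * a \<le> p * (p - (1::int))"
proof -
  have "(a - p) * (a - p + 1) \<ge> 0"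
  proof (cases "a \<ge> p")
    case True then show ?thesis by simp
  next
    case False then have "a - p \<le> 0" "a - p + 1 \<le> 0" by auto
    then show ?thesis by (simp add: mult_nonpos_nonpos)
  qed
  then show ?thesis by (simp add: algebra_simps)
qed

context cfg begin

lemma sum_delta_n: "j \<le> n \<Longrightarrow> (\<Sum>k\<in>{..n}. f k * (if k = j then -1 else 0)) = - (f j :: int)"
proof -
  assume "j \<le> n"
  have "(\<Sum>k\<in>{..n}. f k * (if k = j then -1 else 0)) = (\<Sum>k\<in>{..n}. if k = j then - f k else 0)"
    by (rule sum.cong) auto
  then show ?thesis using \<open>j \<le> n\<close> by simp
qed

lemma upper: "Q D \<le> int (Suc n) * (p * (p - 1))"
proof -
  define \<alpha> where "\<alpha> k = - inter M (seq k) D" for k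
  define V where "V = (\<lambda>F. \<Sum>k\<in>{..n}. \<alpha> k * seq k F)"
  define Y where "Y = D - V"
  have hY: "inter M Y (seq j) = 0" if "j \<le> n" for j
  proof -
    have "inter M V (seq j) = (\<Sum>k\<in>{..n}. \<alpha> k * inter M (seq k) (seq j))"
      unfolding V_def by (rule inter_lin_left)
    also have "\<dots> = (\<Sum>k\<in>{..n}. \<alpha> k * (if k = j then -1 else 0))"
      by (rule sum.cong) (use orthn that in auto)
    also have "\<dots> = - \<alpha> j" using sum_delta_n that by simp
    finally show ?thesis unfolding Y_def using inter_sym[of D "seq j"]
      by (simp add: inter_diff_left \<alpha>_def)
  qed
  have YV: "inter M Y V = 0"
  proof -
    have "inter M Y V = (\<Sum>k\<in>{..n}. \<alpha> k * inter M Y (seq k))"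
      unfolding V_def by (rule inter_lin_right)
    also have "\<dots> = 0" using hY by simp
    finally show ?thesis .
  qed
  have VD: "inter M V D = - (\<Sum>k\<in>{..n}. \<alpha> k * \<alpha> k)"
  proof -
    have "inter M V D = (\<Sum>k\<in>{..n}. \<alpha> k * inter M (seq k) D)"
      unfolding V_def by (rule inter_lin_left)
    then show ?thesis by (simp add: \<alpha>_def sum_negf)
  qed
  have "inter M Y Y = inter M Y D - inter M Y V" unfolding Y_def by (rule inter_diff_right)
  also have "\<dots> = inter M Y D" using YV by simp
  also have "\<dots> = inter M D D - inter M V D" unfolding Y_def by (rule inter_diff_left)
  finally have DD: "inter M D D = inter M Y Y - (\<Sum>k\<in>{..n}. \<alpha> k * \<alpha> k)" using VD by simp
  have sa: "(\<Sum>k\<in>{..n}. \<alpha> k) = D A"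
  proof -
    have "(\<Sum>k\<in>{..n}. \<alpha> k) = - (\<Sum>k\<in>{..n}. \<Sum>F\<in>UNIV. D F * inter_comp M (seq k) F)"
      by (simp add: \<alpha>_def inter_alt sum_negf)
    also have "\<dots> = - (\<Sum>F\<in>UNIV. D F * (\<Sum>k\<in>{..n}. inter_comp M (seq k) F))"
      by (subst sum.swap) (simp add: sum_distrib_left)
    also have "\<dots> = - (\<Sum>F\<in>UNIV. D F * (if F = A then -1 else 0))"
      by (simp add: sumic)
    also have "\<dots> = D A"
    proof -
      have "(\<Sum>F\<in>UNIV. D F * (if F = A then -1 else 0)) = (\<Sum>F\<in>UNIV. if F = A then - D F else 0)"
        by (rule sum.cong) auto
      then show ?thesis by simp
    qed
    finally show ?thesis .
  qed
  have "Q D = inter M D D + (2 * p - 1) * D A" by (simp add: Q_def canon_A kap_val)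
  also have "\<dots> \<le> - (\<Sum>k\<in>{..n}. \<alpha> k * \<alpha> k) + (2 * p - 1) * (\<Sum>k\<in>{..n}. \<alpha> k)"
    using DD nd_le[of Y] sa by simp
  also have "\<dots> = (\<Sum>k\<in>{..n}. (2 * p - 1) * \<alpha> k - \<alpha> k * \<alpha> k)"
    by (simp add: sum_subtractf sum_distrib_left)
  also have "\<dots> \<le> (\<Sum>k\<in>{..n}. p * (p - 1))"
    by (rule sum_mono) (rule quad_bound)
  also have "\<dots> = int (Suc n) * (p * (p - 1))" by simp
  finally show ?thesis .
qed

lemma lower: "\<exists>D. pos_cycle D \<and> Q D = int (Suc n) * (p * (p - 1))"
proof -
  define W where "W = (\<lambda>F. \<Sum>k\<in>{..n}. p * seq k F)"
  have Wk: "inter M (seq k) W = - p" if "k \<le> n" for k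
  proof -
    have "inter M (seq k) W = (\<Sum>j\<in>{..n}. p * inter M (seq k) (seq j))"
      unfolding W_def by (rule inter_lin_right)
    also have "\<dots> = (\<Sum>j\<in>{..n}. if j = k then - p else 0)"
      by (rule sum.cong) (use orthn that in auto)
    also have "\<dots> = - p" using that by simp
    finally show ?thesis .
  qed
  have "inter M W W = (\<Sum>k\<in>{..n}. p * inter M (seq k) W)"
    unfolding W_def by (rule inter_lin_left)
  also have "\<dots> = (\<Sum>k\<in>{..n}. p * (- p))" by (rule sum.cong) (use Wk in auto)
  finally have WW: "inter M W W = - (int (Suc n) * p * p)" by (simp add: algebra_simps)
  have WA: "W A = int (Suc n) * p" by (simp add: W_def seq_A1)
  have "Q W = int (Suc n) * (p * (p - 1))"
    unfolding Q_def canon_A kap_val WW WA by (simp add: algebra_simps)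
  moreover have "pos_cycle W"
    unfolding pos_cycle_def
  proof
    show "\<forall>i. 0 \<le> W i" using p_pos seq_nn by (simp add: W_def sum_nonneg)
    show "\<exists>i. W i \<noteq> 0" using WA p_pos by (intro exI[of _ A]) simp
  qed
  ultimately show ?thesis by blast
qed

lemma final: "arith_genus M g = pa M g Z * (pa M g Z - 1) * int (yau_length M g) div 2 + 1"
proof -
  define G where "G = 1 + int (Suc n) * (p * (p - 1)) div 2"
  have "arith_genus M g = G"
    unfolding arith_genus_def
  proof (rule Greatest_equality)
    obtain D where "pos_cycle D" "Q D = int (Suc n) * (p * (p - 1))" using lower by blast
    then show "\<exists>D. pos_cycle D \<and> G = pa M g D" by (intro exI[of _ D]) (simp add: G_def pa_Q2)
  next
    fix y assume "\<exists>D. pos_cycle D \<and> y = pa M g D"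
    then obtain D where "y = pa M g D" by blast
    then show "y \<le> G" using upper[of D] by (simp add: G_def pa_Q2 zdiv_mono1)
  qed
  then show ?thesis unfolding G_def len_eq p_def[symmetric] by (simp add: mult_ac)
qed

end

theorem main_result:
  fixes M :: "'i::finite \<Rightarrow> 'i \<Rightarrow> int" and g :: "'i \<Rightarrow> nat"
  assumes "exc_config M g"
    and "minimal_config M g"
    and "inter M (fund_cycle M) (fund_cycle M) = -1"
    and "p_f M g > 0"
    and "ess_irreducible M g"
  shows "arith_genus M g =
           p_f M g * (p_f M g - 1) * int (yau_length M g) div 2 + 1"
proof -
  have symM: "\<And>i j. M i j = M j i" and offd: "\<And>i j. i \<noteq> j \<Longrightarrow> M i j \<ge> 0"
    and nd: "\<And>x::'i \<Rightarrow> real. (\<exists>i. x i \<noteq> 0) \<Longrightarrow> (\<Sum>i\<in>UNIV. \<Sum>j\<in>UNIV. x i * x j * of_int (M i j)) < 0"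
    using assms(1) unfolding exc_config_def by blast+
  have fund: "is_fund_on M UNIV (fund_cycle M)" by (rule fund_exists) (fact symM, fact offd, fact nd)
  then have supp: "supp (fund_cycle M) = UNIV" unfolding is_fund_on_def Let_def by blast
  obtain A where A: "fund_cycle M A > 0" "\<not> minus2_curve M g A"
    and R: "(\<forall>i. fund_cycle M i - (if i = A then fund_cycle M A else 0) = 0) \<or>
            (\<forall>i\<in>supp (\<lambda>i. fund_cycle M i - (if i = A then fund_cycle M A else 0)). minus2_curve M g i)"
    using assms(5) unfolding ess_irreducible_def Let_def by blast
  have m2: "g i = 0 \<and> M i i = -2" if "i \<noteq> A" for i
  proof -
    have nz: "fund_cycle M i \<noteq> 0" using supp unfolding supp_def by auto
    then have "i \<in> supp (\<lambda>i. fund_cycle M i - (if i = A then fund_cycle M A else 0))"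
      using that by (simp add: supp_def)
    moreover have "\<not> (\<forall>i. fund_cycle M i - (if i = A then fund_cycle M A else 0) = 0)"
      using nz that by (metis diff_zero)
    ultimately have "minus2_curve M g i" using R by blast
    then show ?thesis by (simp add: minus2_curve_def)
  qed
  interpret cfg M g A
    by unfold_locales (use symM offd nd assms(3) assms(4) m2 in \<open>auto simp: p_f_def\<close>)
  show ?thesis using final by (simp add: p_f_def)
qed


theorem theorem3p11:
  fixes M :: "'i::finite \<Rightarrow> 'i \<Rightarrow> int" and g :: "'i \<Rightarrow> nat"
  assumes "exc_config M g"
    and "minimal_config M g"
    and "inter M (fund_cycle M) (fund_cycle M) = -1"
    and "p_f M g > 0"
    and "ess_irreducible M g"
  shows "arith_genus M g =
           p_f M g * (p_f M g - 1) * int (yau_length M g) div 2 + 1"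
  using assms by (rule main_result)

end
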